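(* Every twisted net with $n$ vertices has at least $2^{n/18+2/3}$ perfect matchings.
   Context: In a graph with all degrees $2$ or $3$, the degree-two vertices are corners; for a graph consisting of a single edge, both its ends are corners. Twisted nets are defined inductively: a $4$-cycle is a twisted net; if $T$ is a twisted net and $H$ is (disjoint from $T$) either a twisted net or a single edge, then the graph obtained from $T\cup H$ by adding edges $uv$ and $u'v'$, where $u\neq u'$ are corners of $T$ and $v\ne v'$ are corners of $H$, is a twisted net. Every twisted net has exactly four corners. *)

theory Defs
  imports Complex_Main
begin

text \<open>Graphs are pairs (V, E) with E a set of 2-element subsets of V.
  A corner of a graph with all degrees 2 or 3 is a vertex of degree 2.\<close>

definition degree :: "'a set set \<Rightarrow> 'a \<Rightarrow> nat" where
  "degree E x = card {e \<in> E. x \<in> e}"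

definition corner :: "'a set \<Rightarrow> 'a set set \<Rightarrow> 'a \<Rightarrow> bool" where
  "corner V E x \<longleftrightarrow> x \<in> V \<and> degree E x = 2"

inductive twisted_net :: "'a set \<Rightarrow> 'a set set \<Rightarrow> bool" where
  cycle4: "distinct [a, b, c, d] \<Longrightarrow>
     twisted_net {a, b, c, d} {{a, b}, {b, c}, {c, d}, {d, a}}"
| join_net: "twisted_net V1 E1 \<Longrightarrow> twisted_net V2 E2 \<Longrightarrow> V1 \<inter> V2 = {} \<Longrightarrow>
     corner V1 E1 u \<Longrightarrow> corner V1 E1 u' \<Longrightarrow> u \<noteq> u' \<Longrightarrow>
     corner V2 E2 v \<Longrightarrow> corner V2 E2 v' \<Longrightarrow> v \<noteq> v' \<Longrightarrow>
     twisted_net (V1 \<union> V2) (E1 \<union> E2 \<union> {{u, v}, {u', v'}})"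
| join_edge: "twisted_net V1 E1 \<Longrightarrow> x \<noteq> y \<Longrightarrow> x \<notin> V1 \<Longrightarrow> y \<notin> V1 \<Longrightarrow>
     corner V1 E1 u \<Longrightarrow> corner V1 E1 u' \<Longrightarrow> u \<noteq> u' \<Longrightarrow>
     twisted_net (V1 \<union> {x, y}) (E1 \<union> {{x, y}} \<union> {{u, x}, {u', y}})"

definition perfect_matching :: "'a set \<Rightarrow> 'a set set \<Rightarrow> 'a set set \<Rightarrow> bool" where
  "perfect_matching V E M \<longleftrightarrow> M \<subseteq> E \<and> (\<forall>x\<in>V. \<exists>!e. e \<in> M \<and> x \<in> e)"

end

theory Submission
  imports Defs
begin


definition lam :: real where "lam = 2 powr (1/9)"
definition ff :: "nat \<Rightarrow> real" where "ff n = 2 powr (real n / 18 + 2/3)"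

lemma lam_pos: "lam > 0" by (simp add: lam_def)
lemma ff_pos: "ff n > 0" by (simp add: ff_def)

lemma lam_pow: "lam ^ k = 2 powr (real k / 9)"
  unfolding lam_def by (subst powr_power) auto

lemma ff_step: "ff (n + 2) = lam * ff n"
  unfolding ff_def lam_def by (simp add: powr_add[symmetric] field_simps)

lemma ff_join: "ff n1 * ff n2 = 2 powr (2/3) * ff (n1 + n2)"
  unfolding ff_def powr_add[symmetric] by (rule arg_cong[where f="\<lambda>x. 2 powr x"]) (simp add: field_simps)

lemma lam_pow_le: "k \<le> 6 \<Longrightarrow> lam ^ k \<le> 2 powr (2/3)"
  unfolding lam_pow by (auto simp: field_simps)

lemma two23: "2 powr (2/3::real) \<le> 2"
proof -
  have "2 powr (2/3::real) \<le> 2 powr 1" by (rule powr_mono) auto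
  thus ?thesis by simp
qed

lemma lam9: "lam ^ 9 = 2"
proof -
  have "lam ^ 9 = 2 powr (real 9 / 9)" by (rule lam_pow)
  also have "\<dots> = 2" by simp
  finally show ?thesis .
qed
lemma lam_le: "lam \<le> 3/2"
proof -
  have "(2::real) \<le> (3/2)^9" by (simp add: eval_nat_numeral)
  hence "lam ^ Suc 8 \<le> (3/2) ^ Suc 8" using lam9 by simp
  thus ?thesis by (rule power_le_imp_le_base) simp
qed
lemma lam2_le: "lam ^ 2 \<le> 3/2"
proof -
  have "(lam^2) ^ 9 = (lam ^ 9)^2" by (simp flip: power_mult add: mult.commute)
  hence "(lam^2) ^ 9 = 4" using lam9 by simp
  moreover have "(4::real) \<le> (3/2)^9" by (simp add: eval_nat_numeral)
  ultimately have "(lam^2) ^ Suc 8 \<le> (3/2) ^ Suc 8" by simp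
  thus ?thesis by (rule power_le_imp_le_base) simp
qed
lemma lam_ge1: "lam \<ge> 1" unfolding lam_def by (rule ge_one_powr_ge_zero) auto

lemma lam_mono: "k \<le> m \<Longrightarrow> lam ^ k \<le> lam ^ m"
  using lam_ge1 by (simp add: power_increasing)

lemma ff4: "ff 4 \<le> 2"
proof -
  have "ff 4 = 2 powr (8/9)" unfolding ff_def by simp
  also have "\<dots> \<le> 2 powr 1" by (rule powr_mono) auto
  finally show ?thesis by simp
qed

lemma ff6: "ff 6 = 2" unfolding ff_def by simp

lemma step_ineq: "k \<le> 6 \<Longrightarrow> F \<ge> 0 \<Longrightarrow> F + lam ^ k * F \<ge> lam ^ (k+1) * F"
proof -
  assume k: "k \<le> 6" and F: "F \<ge> 0"
  have "lam ^ k \<le> 2" using lam_pow_le[OF k] two23 by linarith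
  moreover have "lam - 1 \<le> 1/2" using lam_le by simp
  moreover have "lam ^ k \<ge> 0" using lam_pos by simp
  ultimately have "lam ^ k * (lam - 1) \<le> 2 * (1/2)" using lam_ge1
    by (intro mult_mono) auto
  hence "lam ^ (k+1) \<le> 1 + lam ^ k" by (simp add: algebra_simps)
  thus ?thesis using F by (metis distrib_right mult_1 mult_right_mono)
qed

lemma base_ineq1: "k \<le> 6 \<Longrightarrow> 2 * lam ^ k \<le> max 3 (real k + 1)"
proof (cases "k \<le> 2")
  case True
  hence "lam ^ k \<le> lam ^ 2" by (rule lam_mono)
  thus ?thesis using lam2_le by simp
next
  case False
  assume "k \<le> 6"
  hence "lam ^ k \<le> 2" using lam_pow_le two23 by (meson order_trans)
  thus ?thesis using False by simp
qed

lemma base_ineq2: "k \<le> 6 \<Longrightarrow> 2 * lam ^ k \<le> 2 + real k"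
proof (cases "k = 0")
  case False
  assume "k \<le> 6"
  hence "2 * lam ^ k \<le> max 3 (real k + 1)" by (rule base_ineq1)
  thus ?thesis using False by simp
qed simp



definition ms :: "'a set set \<Rightarrow> 'a set \<Rightarrow> 'a set set set" where
  "ms E W = {M. M \<subseteq> E \<and> \<Union>M \<subseteq> W \<and> (\<forall>x\<in>W. \<exists>!e. e \<in> M \<and> x \<in> e)}"

definition NN :: "'a set set \<Rightarrow> 'a set \<Rightarrow> nat" where
  "NN E W = card (ms E W)"

lemma ms_fin: "finite E \<Longrightarrow> finite (ms E W)"
  by (rule finite_subset[of _ "Pow E"]) (auto simp: ms_def)

lemma ms_mono: "E1 \<subseteq> E2 \<Longrightarrow> ms E1 W \<subseteq> ms E2 W"
  by (auto simp: ms_def)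

lemma NN_mono: "E1 \<subseteq> E2 \<Longrightarrow> finite E2 \<Longrightarrow> NN E1 W \<le> NN E2 W"
  unfolding NN_def using ms_mono[of E1 E2 W] by (intro card_mono ms_fin) auto

lemma ms_empty: "{} \<in> ms E {}" by (auto simp: ms_def)

lemma NN_empty: "finite E \<Longrightarrow> NN E {} \<ge> 1"
  unfolding NN_def using ms_empty[of E] ms_fin[of E "{}"]
  by (metis One_nat_def Suc_leI card_gt_0_iff empty_iff)

lemma ms_union:
  assumes "M1 \<in> ms E W1" "M2 \<in> ms E W2" "W1 \<inter> W2 = {}"
  shows "M1 \<union> M2 \<in> ms E (W1 \<union> W2)"
proof -
  have a: "M1 \<subseteq> E" "\<Union>M1 \<subseteq> W1" "\<forall>x\<in>W1. \<exists>!e. e \<in> M1 \<and> x \<in> e"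
    using assms(1) by (auto simp: ms_def)
  have b: "M2 \<subseteq> E" "\<Union>M2 \<subseteq> W2" "\<forall>x\<in>W2. \<exists>!e. e \<in> M2 \<and> x \<in> e"
    using assms(2) by (auto simp: ms_def)
  have "\<forall>x\<in>W1 \<union> W2. \<exists>!e. e \<in> M1 \<union> M2 \<and> x \<in> e"
  proof
    fix x assume x: "x \<in> W1 \<union> W2"
    show "\<exists>!e. e \<in> M1 \<union> M2 \<and> x \<in> e"
    proof (cases "x \<in> W1")
      case True
      then obtain e where e: "e \<in> M1" "x \<in> e" "\<And>e'. e' \<in> M1 \<Longrightarrow> x \<in> e' \<Longrightarrow> e' = e"
        using a(3) by metis
      have "\<And>e'. e' \<in> M2 \<Longrightarrow> x \<notin> e'" using b(2) True assms(3) by blast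
      then show ?thesis using e by blast
    next
      case False
      then have xw: "x \<in> W2" using x by auto
      then obtain e where e: "e \<in> M2" "x \<in> e" "\<And>e'. e' \<in> M2 \<Longrightarrow> x \<in> e' \<Longrightarrow> e' = e"
        using b(3) by metis
      have "\<And>e'. e' \<in> M1 \<Longrightarrow> x \<notin> e'" using a(2) False by blast
      then show ?thesis using e by blast
    qed
  qed
  then show ?thesis using a b by (auto simp: ms_def)
qed

lemma ms_single: "{a, b} \<in> E \<Longrightarrow> {{a, b}} \<in> ms E {a, b}"
  by (auto simp: ms_def)

lemma ms_sub: "M \<in> ms E W \<Longrightarrow> e \<in> M \<Longrightarrow> e \<subseteq> W"
  by (auto simp: ms_def)

lemma card_inj_le:
  assumes "finite B" "inj_on g A" "g ` A \<subseteq> B"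
  shows "card A \<le> card B"
  using assms card_inj_on_le by blast

lemma NN_add_edge:
  assumes fin: "finite E'" and sub: "E1 \<subseteq> E'" and ab: "{a, b} \<in> E'"
    and aW: "a \<in> W" and bW: "b \<notin> W"
  shows "NN E1 (W - {a}) \<le> NN E' (W \<union> {b})"
  unfolding NN_def
proof (rule card_inj_le[where g="\<lambda>M. M \<union> {{a,b}}"])
  show "finite (ms E' (W \<union> {b}))" by (rule ms_fin[OF fin])
  show "inj_on (\<lambda>M. M \<union> {{a, b}}) (ms E1 (W - {a}))"
  proof (rule inj_onI)
    fix M M' assume M: "M \<in> ms E1 (W - {a})" and M': "M' \<in> ms E1 (W - {a})"
      and eq: "M \<union> {{a, b}} = M' \<union> {{a, b}}"
    have "{a,b} \<notin> M" using ms_sub[OF M] by auto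
    moreover have "{a,b} \<notin> M'" using ms_sub[OF M'] by auto
    ultimately show "M = M'" using eq by blast
  qed
  show "(\<lambda>M. M \<union> {{a, b}}) ` ms E1 (W - {a}) \<subseteq> ms E' (W \<union> {b})"
  proof
    fix N assume "N \<in> (\<lambda>M. M \<union> {{a, b}}) ` ms E1 (W - {a})"
    then obtain M where M: "M \<in> ms E1 (W - {a})" and N: "N = M \<union> {{a,b}}" by auto
    have "M \<in> ms E' (W - {a})" using M ms_mono[OF sub] by auto
    moreover have "{{a,b}} \<in> ms E' {a,b}" using ab by (rule ms_single)
    moreover have "(W - {a}) \<inter> {a,b} = {}" using bW by auto
    ultimately have "M \<union> {{a,b}} \<in> ms E' ((W - {a}) \<union> {a,b})" by (rule ms_union)
    moreover have "(W - {a}) \<union> {a,b} = W \<union> {b}" using aW by auto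
    ultimately show "N \<in> ms E' (W \<union> {b})" using N by simp
  qed
qed

lemma NN_add_path:
  assumes fin: "finite E'" and sub: "E1 \<subseteq> E'" and e1: "{x, y} \<in> E'"
    and e2: "{u, x} \<in> E'" and e3: "{u', y} \<in> E'"
    and uW: "u \<in> W" and u'W: "u' \<in> W" and xW: "x \<notin> W" and yW: "y \<notin> W" and xy: "x \<noteq> y" and uu: "u \<noteq> u'"
  shows "NN E1 W + NN E1 (W - {u, u'}) \<le> NN E' (W \<union> {x, y})"
proof -
  let ?A = "ms E1 W" and ?B = "ms E1 (W - {u, u'})" and ?T = "ms E' (W \<union> {x, y})"
  let ?f = "\<lambda>M. M \<union> {{x,y}}" and ?g = "\<lambda>M. M \<union> {{u,x},{u',y}}"
  have finE1: "finite E1" using fin sub finite_subset by blast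
  have injf: "inj_on ?f ?A"
  proof (rule inj_onI)
    fix M M' assume M: "M \<in> ?A" and M': "M' \<in> ?A" and eq: "?f M = ?f M'"
    have "{x,y} \<notin> M" using ms_sub[OF M] xW by auto
    moreover have "{x,y} \<notin> M'" using ms_sub[OF M'] xW by auto
    ultimately show "M = M'" using eq by blast
  qed
  have injg: "inj_on ?g ?B"
  proof (rule inj_onI)
    fix M M' assume M: "M \<in> ?B" and M': "M' \<in> ?B" and eq: "?g M = ?g M'"
    have "{u,x} \<notin> M" "{u',y} \<notin> M" using ms_sub[OF M] xW yW by auto
    moreover have "{u,x} \<notin> M'" "{u',y} \<notin> M'" using ms_sub[OF M'] xW yW by auto
    ultimately show "M = M'" using eq by blast
  qed
  have fT: "?f ` ?A \<subseteq> ?T"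
  proof
    fix N assume "N \<in> ?f ` ?A"
    then obtain M where M: "M \<in> ?A" and N: "N = ?f M" by auto
    have "M \<in> ms E' W" using M ms_mono[OF sub] by auto
    moreover have "{{x,y}} \<in> ms E' {x,y}" using e1 by (rule ms_single)
    moreover have "W \<inter> {x,y} = {}" using xW yW by auto
    ultimately have "M \<union> {{x,y}} \<in> ms E' (W \<union> {x,y})" by (rule ms_union)
    thus "N \<in> ?T" using N by simp
  qed
  have gT: "?g ` ?B \<subseteq> ?T"
  proof
    fix N assume "N \<in> ?g ` ?B"
    then obtain M where M: "M \<in> ?B" and N: "N = ?g M" by auto
    have "M \<in> ms E' (W - {u,u'})" using M ms_mono[OF sub] by auto
    moreover have "{{u,x}} \<in> ms E' {u,x}" using e2 by (rule ms_single)
    moreover have "(W - {u,u'}) \<inter> {u,x} = {}" using xW by auto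
    ultimately have "M \<union> {{u,x}} \<in> ms E' ((W - {u,u'}) \<union> {u,x})" by (rule ms_union)
    moreover have "{{u',y}} \<in> ms E' {u',y}" using e3 by (rule ms_single)
    moreover have "((W - {u,u'}) \<union> {u,x}) \<inter> {u',y} = {}" using xW yW xy uW u'W uu by auto
    ultimately have "(M \<union> {{u,x}}) \<union> {{u',y}} \<in> ms E' (((W - {u,u'}) \<union> {u,x}) \<union> {u',y})"
      by (rule ms_union)
    moreover have "((W - {u,u'}) \<union> {u,x}) \<union> {u',y} = W \<union> {x,y}" using uW u'W by auto
    moreover have "(M \<union> {{u,x}}) \<union> {{u',y}} = N" using N by auto
    ultimately show "N \<in> ?T" by simp
  qed
  have disj: "?f ` ?A \<inter> ?g ` ?B = {}"
  proof (rule ccontr)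
    assume "?f ` ?A \<inter> ?g ` ?B \<noteq> {}"
    then obtain M M' where M: "M' \<in> ?B" and eq: "?f M = ?g M'" by blast
    have "{x,y} \<in> ?g M'" using eq by auto
    moreover have "{x,y} \<notin> M'" using ms_sub[OF M] xW by auto
    moreover have "{x,y} \<noteq> {u,x}" using uW xW yW by (auto simp: doubleton_eq_iff)
    moreover have "{x,y} \<noteq> {u',y}" using u'W xW yW by (auto simp: doubleton_eq_iff)
    ultimately show False by auto
  qed
  have "card (?f ` ?A \<union> ?g ` ?B) = card ?A + card ?B"
    using disj injf injg ms_fin[OF finE1]
    by (simp add: card_Un_disjoint card_image)
  moreover have "card (?f ` ?A \<union> ?g ` ?B) \<le> card ?T"
    using fT gT ms_fin[OF fin] by (intro card_mono) auto
  ultimately show ?thesis unfolding NN_def by simp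
qed

lemma NN_prod:
  assumes fin: "finite E'" and sub1: "E1 \<subseteq> E'" and sub2: "E2 \<subseteq> E'"
    and disj: "W1 \<inter> W2 = {}"
    and ne1: "{} \<notin> E1" and ne2: "{} \<notin> E2"
  shows "NN E1 W1 * NN E2 W2 \<le> NN E' (W1 \<union> W2)"
proof -
  let ?h = "\<lambda>(M1, M2). M1 \<union> M2"
  have fin1: "finite E1" "finite E2" using fin sub1 sub2 finite_subset by blast+
  have inj: "inj_on ?h (ms E1 W1 \<times> ms E2 W2)"
  proof (rule inj_onI, clarify)
    fix M1 M2 N1 N2 assume A: "M1 \<in> ms E1 W1" "M2 \<in> ms E2 W2" "N1 \<in> ms E1 W1" "N2 \<in> ms E2 W2"
      and eq: "M1 \<union> M2 = N1 \<union> N2"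
    have s1: "\<And>e. e \<in> M1 \<Longrightarrow> e \<subseteq> W1 \<and> e \<noteq> {}" "\<And>e. e \<in> N1 \<Longrightarrow> e \<subseteq> W1 \<and> e \<noteq> {}"
      using A ne1 by (auto simp: ms_def)
    have s2: "\<And>e. e \<in> M2 \<Longrightarrow> e \<subseteq> W2 \<and> e \<noteq> {}" "\<And>e. e \<in> N2 \<Longrightarrow> e \<subseteq> W2 \<and> e \<noteq> {}"
      using A ne2 by (auto simp: ms_def)
    have k1: "M1 = {e \<in> M1 \<union> M2. e \<subseteq> W1}" using s1 s2 disj by blast
    have k2: "N1 = {e \<in> N1 \<union> N2. e \<subseteq> W1}" using s1 s2 disj by blast
    have k3: "M2 = {e \<in> M1 \<union> M2. e \<subseteq> W2}" using s1 s2 disj by blast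
    have k4: "N2 = {e \<in> N1 \<union> N2. e \<subseteq> W2}" using s1 s2 disj by blast
    show "M1 = N1 \<and> M2 = N2" using k1 k2 k3 k4 eq by metis
  qed
  have img: "?h ` (ms E1 W1 \<times> ms E2 W2) \<subseteq> ms E' (W1 \<union> W2)"
  proof clarify
    fix M1 M2 assume "M1 \<in> ms E1 W1" "M2 \<in> ms E2 W2"
    then have "M1 \<in> ms E' W1" "M2 \<in> ms E' W2" using ms_mono sub1 sub2 by blast+
    then show "M1 \<union> M2 \<in> ms E' (W1 \<union> W2)" using disj by (rule ms_union)
  qed
  have "card (ms E1 W1 \<times> ms E2 W2) \<le> card (ms E' (W1 \<union> W2))"
    using card_inj_on_le[OF inj img ms_fin[OF fin]] .
  then show ?thesis unfolding NN_def by (simp add: card_cartesian_product)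
qed



definition wfg :: "'a set \<Rightarrow> 'a set set \<Rightarrow> bool" where
  "wfg V E \<longleftrightarrow> finite V \<and> (\<forall>e\<in>E. e \<subseteq> V \<and> card e = 2)"

definition Cs :: "'a set \<Rightarrow> 'a set set \<Rightarrow> 'a set" where
  "Cs V E = {z. corner V E z}"

definition pairs :: "'a set \<Rightarrow> 'a set set" where
  "pairs C = {e. e \<subseteq> C \<and> card e = 2}"

lemma wf_finE: "wfg V E \<Longrightarrow> finite E"
  unfolding wfg_def by (rule finite_subset[of _ "Pow V"]) auto

lemma wf_ne: "wfg V E \<Longrightarrow> {} \<notin> E"
  unfolding wfg_def by force

lemma Cs_sub: "Cs V E \<subseteq> V"
  unfolding Cs_def corner_def by auto

lemma pairs_fin: "finite C \<Longrightarrow> finite (pairs C)"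
  unfolding pairs_def by (rule finite_subset[of _ "Pow C"]) auto

lemma pairs_card: "finite C \<Longrightarrow> card C \<le> 4 \<Longrightarrow> card (pairs C) \<le> 6"
proof -
  assume f: "finite C" and c: "card C \<le> 4"
  have "card (pairs C) = card C choose 2" unfolding pairs_def using n_subsets[OF f] by simp
  also have "\<dots> \<le> 4 choose 2" using c by (rule binomial_right_mono)
  also have "\<dots> = 6" by (simp add: choose_two)
  finally show ?thesis .
qed

lemma card_pairs_sub: "finite C \<Longrightarrow> card C \<le> 4 \<Longrightarrow> F \<subseteq> pairs C \<Longrightarrow> card F \<le> 6"
  by (meson card_mono order_trans pairs_card pairs_fin)

lemma edge_struct:
  assumes wfg: "wfg V1 E1" and x: "x \<notin> V1" and y: "y \<notin> V1" and xy: "x \<noteq> y"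
    and u: "corner V1 E1 u" and u': "corner V1 E1 u'" and uu: "u \<noteq> u'"
  shows "wfg (V1 \<union> {x,y}) (E1 \<union> {{x,y}} \<union> {{u,x},{u',y}})"
    and "card (V1 \<union> {x,y}) = card V1 + 2"
    and "Cs (V1 \<union> {x,y}) (E1 \<union> {{x,y}} \<union> {{u,x},{u',y}}) \<subseteq> {x,y} \<union> (Cs V1 E1 - {u,u'})"
proof -
  let ?E = "E1 \<union> {{x,y}} \<union> {{u,x},{u',y}}"
  have uV: "u \<in> V1" "u' \<in> V1" using u u' by (auto simp: corner_def)
  have finV: "finite V1" using wfg by (simp add: wfg_def)
  have eV: "\<And>e. e \<in> E1 \<Longrightarrow> e \<subseteq> V1" using wfg by (simp add: wfg_def)
  show "wfg (V1 \<union> {x,y}) ?E" using wfg uV x y xy by (auto simp: wfg_def card_insert_if)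
  show "card (V1 \<union> {x,y}) = card V1 + 2" using finV x y xy by (simp add: card_insert_if)
  have finD: "\<And>z. finite {e \<in> E1. z \<in> e}" using wf_finE[OF wfg] by simp
  show "Cs (V1 \<union> {x,y}) ?E \<subseteq> {x,y} \<union> (Cs V1 E1 - {u,u'})"
  proof
    fix z assume "z \<in> Cs (V1 \<union> {x,y}) ?E"
    hence zc: "z \<in> V1 \<union> {x,y}" "card {e \<in> ?E. z \<in> e} = 2"
      by (auto simp: Cs_def corner_def degree_def)
    show "z \<in> {x,y} \<union> (Cs V1 E1 - {u,u'})"
    proof (cases "z \<in> {x,y}")
      case False
      hence zV: "z \<in> V1" using zc by auto
      show ?thesis
      proof (cases "z = u")
        case True
        have "{e \<in> ?E. z \<in> e} = insert {u,x} {e \<in> E1. u \<in> e}"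
          using True zV x y xy uu False by auto
        moreover have "{u,x} \<notin> E1" using eV x by auto
        ultimately have "card {e \<in> ?E. z \<in> e} = Suc (card {e \<in> E1. u \<in> e})"
          using finD by simp
        moreover have "card {e \<in> E1. u \<in> e} = 2" using u by (simp add: corner_def degree_def)
        ultimately show ?thesis using zc by simp
      next
        case zu: False
        show ?thesis
        proof (cases "z = u'")
          case True
          have "{e \<in> ?E. z \<in> e} = insert {u',y} {e \<in> E1. u' \<in> e}"
            using True zV x y xy uu False by auto
          moreover have "{u',y} \<notin> E1" using eV y by auto
          ultimately have "card {e \<in> ?E. z \<in> e} = Suc (card {e \<in> E1. u' \<in> e})"
            using finD by simp
          moreover have "card {e \<in> E1. u' \<in> e} = 2" using u' by (simp add: corner_def degree_def)
          ultimately show ?thesis using zc by simp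
        next
          case zu': False
          have "{e \<in> ?E. z \<in> e} = {e \<in> E1. z \<in> e}"
            using zu zu' False by auto
          hence "corner V1 E1 z" using zc zV by (simp add: corner_def degree_def)
          thus ?thesis using zu zu' by (simp add: Cs_def)
        qed
      qed
    qed auto
  qed
qed

lemma net_struct:
  assumes wf1: "wfg V1 E1" and wf2: "wfg V2 E2" and disj: "V1 \<inter> V2 = {}"
    and u: "corner V1 E1 u" and u': "corner V1 E1 u'" and uu: "u \<noteq> u'"
    and v: "corner V2 E2 v" and v': "corner V2 E2 v'" and vv: "v \<noteq> v'"
  shows "wfg (V1 \<union> V2) (E1 \<union> E2 \<union> {{u,v},{u',v'}})"
    and "card (V1 \<union> V2) = card V1 + card V2"
    and "Cs (V1 \<union> V2) (E1 \<union> E2 \<union> {{u,v},{u',v'}}) \<subseteq> (Cs V1 E1 - {u,u'}) \<union> (Cs V2 E2 - {v,v'})"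
proof -
  let ?E = "E1 \<union> E2 \<union> {{u,v},{u',v'}}"
  have uV: "u \<in> V1" "u' \<in> V1" using u u' by (auto simp: corner_def)
  have vV: "v \<in> V2" "v' \<in> V2" using v v' by (auto simp: corner_def)
  have finV: "finite V1" "finite V2" using wf1 wf2 by (auto simp: wfg_def)
  have eV1: "\<And>e. e \<in> E1 \<Longrightarrow> e \<subseteq> V1" using wf1 by (simp add: wfg_def)
  have eV2: "\<And>e. e \<in> E2 \<Longrightarrow> e \<subseteq> V2" using wf2 by (simp add: wfg_def)
  have uv: "u \<noteq> v" "u' \<noteq> v'" using uV vV disj by auto
  show "wfg (V1 \<union> V2) ?E" using wf1 wf2 uV vV uv by (auto simp: wfg_def card_insert_if)
  show "card (V1 \<union> V2) = card V1 + card V2" using finV disj by (simp add: card_Un_disjoint)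
  have finD1: "\<And>z. finite {e \<in> E1. z \<in> e}" using wf_finE[OF wf1] by simp
  have finD2: "\<And>z. finite {e \<in> E2. z \<in> e}" using wf_finE[OF wf2] by simp
  show "Cs (V1 \<union> V2) ?E \<subseteq> (Cs V1 E1 - {u,u'}) \<union> (Cs V2 E2 - {v,v'})"
  proof
    fix z assume "z \<in> Cs (V1 \<union> V2) ?E"
    hence zc: "z \<in> V1 \<union> V2" "card {e \<in> ?E. z \<in> e} = 2"
      by (auto simp: Cs_def corner_def degree_def)
    show "z \<in> (Cs V1 E1 - {u,u'}) \<union> (Cs V2 E2 - {v,v'})"
    proof (cases "z \<in> V1")
      case zV: True
      have nz2: "\<And>e. e \<in> E2 \<Longrightarrow> z \<notin> e" using eV2 zV disj by blast
      have zv: "z \<noteq> v" "z \<noteq> v'" using zV vV disj by auto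
      show ?thesis
      proof (cases "z = u")
        case True
        have "{e \<in> ?E. z \<in> e} = insert {u,v} {e \<in> E1. u \<in> e}"
          using True nz2 zv uu by auto
        moreover have "{u,v} \<notin> E1" using eV1 vV disj by auto
        ultimately have "card {e \<in> ?E. z \<in> e} = Suc (card {e \<in> E1. u \<in> e})"
          using finD1 by simp
        moreover have "card {e \<in> E1. u \<in> e} = 2" using u by (simp add: corner_def degree_def)
        ultimately show ?thesis using zc by simp
      next
        case zu: False
        show ?thesis
        proof (cases "z = u'")
          case True
          have "{e \<in> ?E. z \<in> e} = insert {u',v'} {e \<in> E1. u' \<in> e}"
            using True nz2 zv uu by auto
          moreover have "{u',v'} \<notin> E1" using eV1 vV disj by auto
          ultimately have "card {e \<in> ?E. z \<in> e} = Suc (card {e \<in> E1. u' \<in> e})"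
            using finD1 by simp
          moreover have "card {e \<in> E1. u' \<in> e} = 2" using u' by (simp add: corner_def degree_def)
          ultimately show ?thesis using zc by simp
        next
          case zu': False
          have "{e \<in> ?E. z \<in> e} = {e \<in> E1. z \<in> e}"
            using zu zu' nz2 zv by auto
          hence "corner V1 E1 z" using zc zV by (simp add: corner_def degree_def)
          thus ?thesis using zu zu' by (simp add: Cs_def)
        qed
      qed
    next
      case False
      hence zV: "z \<in> V2" using zc by auto
      have nz1: "\<And>e. e \<in> E1 \<Longrightarrow> z \<notin> e" using eV1 False by blast
      have zv: "z \<noteq> u" "z \<noteq> u'" using uV False by auto
      show ?thesis
      proof (cases "z = v")
        case True
        have "{e \<in> ?E. z \<in> e} = insert {u,v} {e \<in> E2. v \<in> e}"
          using True nz1 zv vv by auto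
        moreover have "{u,v} \<notin> E2" using eV2 uV disj by auto
        ultimately have "card {e \<in> ?E. z \<in> e} = Suc (card {e \<in> E2. v \<in> e})"
          using finD2 by simp
        moreover have "card {e \<in> E2. v \<in> e} = 2" using v by (simp add: corner_def degree_def)
        ultimately show ?thesis using zc by simp
      next
        case zu: False
        show ?thesis
        proof (cases "z = v'")
          case True
          have "{e \<in> ?E. z \<in> e} = insert {u',v'} {e \<in> E2. v' \<in> e}"
            using True nz1 zv vv by auto
          moreover have "{u',v'} \<notin> E2" using eV2 uV disj by auto
          ultimately have "card {e \<in> ?E. z \<in> e} = Suc (card {e \<in> E2. v' \<in> e})"
            using finD2 by simp
          moreover have "card {e \<in> E2. v' \<in> e} = 2" using v' by (simp add: corner_def degree_def)
          ultimately show ?thesis using zc by simp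
        next
          case zu': False
          have "{e \<in> ?E. z \<in> e} = {e \<in> E2. z \<in> e}"
            using zu zu' nz1 zv by auto
          hence "corner V2 E2 z" using zc zV by (simp add: corner_def degree_def)
          thus ?thesis using zu zu' by (simp add: Cs_def)
        qed
      qed
    qed
  qed
qed



definition LL :: "'a set \<Rightarrow> 'a set set \<Rightarrow> 'a set set \<Rightarrow> real" where
  "LL V E F = real (NN E V) + (\<Sum>e\<in>F. real (NN E (V - e)))"

locale estep =
  fixes V1 :: "'a set" and E1 x y u u'
  assumes wfg: "wfg V1 E1" and x: "x \<notin> V1" and y: "y \<notin> V1" and xy: "x \<noteq> y"
    and uV: "u \<in> V1" and u'V: "u' \<in> V1" and uu: "u \<noteq> u'"
begin

abbreviation "V' \<equiv> V1 \<union> {x,y}"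
abbreviation "E' \<equiv> E1 \<union> {{x,y}} \<union> {{u,x},{u',y}}"

lemma finE': "finite E'" using wf_finE[OF wfg] by simp
lemma subE: "E1 \<subseteq> E'" by auto

lemma bP: "NN E1 V1 + NN E1 (V1 - {u,u'}) \<le> NN E' V'"
  by (rule NN_add_path[OF finE' subE]) (use x y xy uV u'V uu in auto)

lemma bx: assumes "w \<in> V1" "w \<noteq> u'"
  shows "NN E1 (V1 - {w,u'}) \<le> NN E' (V' - {x,w})"
proof -
  have "NN E1 ((V1 - {w}) - {u'}) \<le> NN E' ((V1 - {w}) \<union> {y})"
    by (rule NN_add_edge[OF finE' subE]) (use y u'V assms in auto)
  moreover have "(V1 - {w}) - {u'} = V1 - {w,u'}" by auto
  moreover have "(V1 - {w}) \<union> {y} = V' - {x,w}" using x y xy assms by auto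
  ultimately show ?thesis by simp
qed

lemma by_: assumes "w \<in> V1" "w \<noteq> u"
  shows "NN E1 (V1 - {w,u}) \<le> NN E' (V' - {y,w})"
proof -
  have "NN E1 ((V1 - {w}) - {u}) \<le> NN E' ((V1 - {w}) \<union> {x})"
    by (rule NN_add_edge[OF finE' subE]) (use x uV assms in auto)
  moreover have "(V1 - {w}) - {u} = V1 - {w,u}" by auto
  moreover have "(V1 - {w}) \<union> {x} = V' - {y,w}" using x y xy assms by auto
  ultimately show ?thesis by simp
qed

lemma bD: assumes "e \<subseteq> V1 - {u,u'}"
  shows "NN E1 (V1 - e) + NN E1 (V1 - e - {u,u'}) \<le> NN E' (V' - e)"
proof -
  have "NN E1 (V1 - e) + NN E1 ((V1 - e) - {u,u'}) \<le> NN E' ((V1 - e) \<union> {x,y})"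
    by (rule NN_add_path[OF finE' subE]) (use x y xy uV u'V uu assms in auto)
  moreover have "(V1 - e) \<union> {x,y} = V' - e" using x y assms by auto
  ultimately show ?thesis by simp
qed

lemma bxy: "NN E1 V1 \<le> NN E' (V' - {x,y})"
proof -
  have "V' - {x,y} = V1" using x y by auto
  thus ?thesis using NN_mono[OF subE finE'] by simp
qed

end

lemma sum_split_elem:
  assumes "finite F"
  shows "(\<Sum>e\<in>F. g e) = (if a \<in> F then g a else 0) + (\<Sum>e\<in>F - {a}. g e)"
  using assms by (simp add: sum.remove)

lemma (in estep) general_step:
  assumes uC: "u \<in> Cs V1 E1" and u'C: "u' \<in> Cs V1 E1"
    and F: "F \<subseteq> pairs ({x,y} \<union> (Cs V1 E1 - {u,u'}))"
  shows "\<exists>G. G \<subseteq> pairs (Cs V1 E1) \<and> card G = card (F - {{x,y}}) + 1 \<and>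
     LL V1 E1 G + (if {x,y} \<in> F then real (NN E1 V1) else 0) \<le> LL V' E' F"
proof -
  define C1 where "C1 = Cs V1 E1"
  define D where "D = C1 - {u,u'}"
  define F0 where "F0 = F - {{x,y}}"
  have C1V: "C1 \<subseteq> V1" unfolding C1_def by (rule Cs_sub)
  have finV: "finite V1" using wfg by (simp add: wfg_def)
  have finC: "finite C1" using C1V finV finite_subset by blast
  have DV: "D \<subseteq> V1" using C1V by (auto simp: D_def)
  have finF: "finite F" using F pairs_fin[of "{x,y} \<union> D"] finC finite_subset
    unfolding D_def C1_def by auto
  have finF0: "finite F0" using finF by (simp add: F0_def)
  define \<phi> where "\<phi> e = (if x \<in> e then insert u' (e - {x}) else if y \<in> e then insert u (e - {y}) else e)" for e
  define \<psi> where "\<psi> e = (if u' \<in> e then insert x (e - {u'}) else if u \<in> e then insert y (e - {u}) else e)" for e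
  have elem: "(\<exists>w\<in>D. e = {x,w}) \<or> (\<exists>w\<in>D. e = {y,w}) \<or> (e \<subseteq> D \<and> card e = 2)" if e: "e \<in> F0" for e
  proof -
    have "e \<subseteq> {x,y} \<union> D" "card e = 2" "e \<noteq> {x,y}" using e F unfolding F0_def pairs_def D_def C1_def by auto
    then obtain p q where pq: "e = {p,q}" "p \<noteq> q" "p \<in> {x,y} \<union> D" "q \<in> {x,y} \<union> D"
      by (auto simp: card_2_iff)
    have xD: "x \<notin> D" "y \<notin> D" using DV x y by auto
    show ?thesis
    proof (cases "p \<in> D")
      case pD: True
      show ?thesis
      proof (cases "q \<in> D")
        case True thus ?thesis using pD pq by auto
      next
        case False
        hence "q = x \<or> q = y" using pq by auto
        thus ?thesis using pD pq by (auto simp: insert_commute)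
      qed
    next
      case False
      hence p: "p = x \<or> p = y" using pq by auto
      show ?thesis
      proof (cases "q \<in> D")
        case True thus ?thesis using p pq by auto
      next
        case False
        hence "q = x \<or> q = y" using pq by auto
        hence "e = {x,y}" using p pq by auto
        thus ?thesis using \<open>e \<noteq> {x,y}\<close> by simp
      qed
    qed
  qed
  have facts: "\<phi> e \<in> pairs C1 \<and> \<phi> e \<noteq> {u,u'} \<and> \<psi> (\<phi> e) = e \<and> NN E1 (V1 - \<phi> e) \<le> NN E' (V' - e)"
    if e: "e \<in> F0" for e
  proof -
    have uC1: "u \<in> C1" "u' \<in> C1" using uC u'C by (auto simp: C1_def)
    consider (X) w where "w \<in> D" "e = {x,w}" | (Y) w where "w \<in> D" "e = {y,w}" | (Z) "e \<subseteq> D" "card e = 2"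
      using elem[OF e] by blast
    then show ?thesis
    proof cases
      case X
      have w: "w \<in> V1" "w \<noteq> u" "w \<noteq> u'" "w \<noteq> x" "w \<noteq> y" "w \<in> C1"
        using X DV x y by (auto simp: D_def)
      have pe: "\<phi> e = {u',w}" using X w by (auto simp: \<phi>_def)
      have "\<psi> (\<phi> e) = e" using pe X w by (auto simp: \<psi>_def)
      moreover have "NN E1 (V1 - \<phi> e) \<le> NN E' (V' - e)"
        using bx[of w] w pe X by (simp add: insert_commute)
      ultimately show ?thesis using pe w uC1 uu by (auto simp: pairs_def doubleton_eq_iff)
    next
      case Y
      have w: "w \<in> V1" "w \<noteq> u" "w \<noteq> u'" "w \<noteq> x" "w \<noteq> y" "w \<in> C1"
        using Y DV x y by (auto simp: D_def)
      have pe: "\<phi> e = {u,w}" using Y w xy by (auto simp: \<phi>_def)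
      have "\<psi> (\<phi> e) = e" using pe Y w uu by (auto simp: \<psi>_def)
      moreover have "NN E1 (V1 - \<phi> e) \<le> NN E' (V' - e)"
        using by_[of w] w pe Y by (simp add: insert_commute)
      ultimately show ?thesis using pe w uC1 uu by (auto simp: pairs_def doubleton_eq_iff)
    next
      case Z
      have nx: "x \<notin> e" "y \<notin> e" "u \<notin> e" "u' \<notin> e" using Z DV x y by (auto simp: D_def)
      have pe: "\<phi> e = e" using nx by (simp add: \<phi>_def)
      have "\<psi> (\<phi> e) = e" using pe nx by (simp add: \<psi>_def)
      moreover have "NN E1 (V1 - \<phi> e) \<le> NN E' (V' - e)"
      proof -
        have "e \<subseteq> V1 - {u,u'}" using Z DV nx by (auto simp: D_def)
        from bD[OF this] show ?thesis using pe by simp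
      qed
      moreover have "e \<noteq> {u,u'}" using nx by auto
      ultimately show ?thesis using pe Z by (auto simp: pairs_def D_def)
    qed
  qed
  have inj: "inj_on \<phi> F0" using facts by (intro inj_on_inverseI[where g=\<psi>]) auto
  define G where "G = insert {u,u'} (\<phi> ` F0)"
  have notin: "{u,u'} \<notin> \<phi> ` F0" using facts by auto
  have cardG: "card G = card F0 + 1"
    unfolding G_def using notin finF0 inj by (simp add: card_image)
  have Gsub: "G \<subseteq> pairs C1"
    unfolding G_def using facts uC u'C uu by (auto simp: pairs_def C1_def)
  have sumG: "(\<Sum>e\<in>G. real (NN E1 (V1 - e))) = real (NN E1 (V1 - {u,u'})) + (\<Sum>e\<in>F0. real (NN E1 (V1 - \<phi> e)))"
    unfolding G_def using notin finF0 inj by (simp add: sum.reindex)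
  have s0: "(\<Sum>e\<in>F0. real (NN E1 (V1 - \<phi> e))) \<le> (\<Sum>e\<in>F0. real (NN E' (V' - e)))"
    using facts by (intro sum_mono) auto
  have sF: "(\<Sum>e\<in>F. real (NN E' (V' - e))) = (if {x,y} \<in> F then real (NN E' (V' - {x,y})) else 0)
        + (\<Sum>e\<in>F0. real (NN E' (V' - e)))"
    unfolding F0_def by (rule sum_split_elem[OF finF])
  have sxy: "(if {x,y} \<in> F then real (NN E1 V1) else 0) \<le> (if {x,y} \<in> F then real (NN E' (V' - {x,y})) else 0)"
    using bxy by auto
  have "LL V1 E1 G + (if {x,y} \<in> F then real (NN E1 V1) else 0)
      = real (NN E1 V1) + real (NN E1 (V1 - {u,u'})) + (\<Sum>e\<in>F0. real (NN E1 (V1 - \<phi> e)))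
        + (if {x,y} \<in> F then real (NN E1 V1) else 0)"
    unfolding LL_def sumG by simp
  also have "\<dots> \<le> real (NN E' V') + (\<Sum>e\<in>F. real (NN E' (V' - e)))"
  proof -
    have "real (NN E1 V1) + real (NN E1 (V1 - {u,u'})) \<le> real (NN E' V')"
      using bP by linarith
    thus ?thesis using s0 sF sxy by linarith
  qed
  also have "\<dots> = LL V' E' F" unfolding LL_def by simp
  finally show ?thesis using Gsub cardG unfolding C1_def F0_def by blast
qed



definition cyc :: "'a \<Rightarrow> 'a \<Rightarrow> 'a \<Rightarrow> 'a \<Rightarrow> 'a set \<Rightarrow> 'a set set \<Rightarrow> bool" where
  "cyc a b c d V E \<longleftrightarrow> distinct [a,b,c,d] \<and> V = {a,b,c,d} \<and> E = {{a,b},{b,c},{c,d},{d,a}}"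

lemma cyc_rot: "cyc a b c d V E \<Longrightarrow> cyc b c d a V E"
  unfolding cyc_def by (auto simp: insert_commute)

lemma cyc_refl: "cyc a b c d V E \<Longrightarrow> cyc a d c b V E"
  unfolding cyc_def by (auto simp: insert_commute)

lemma cyc_wlog:
  assumes c: "cyc a b c d V E" and u: "u \<in> V" and u': "u' \<in> V" and uu: "u \<noteq> u'"
  shows "\<exists>a' b' c' d'. cyc a' b' c' d' V E \<and> u = a' \<and> (u' = b' \<or> u' = c')"
proof -
  have r1: "cyc b c d a V E" using cyc_rot[OF c] .
  have r2: "cyc c d a b V E" using cyc_rot[OF r1] .
  have r3: "cyc d a b c V E" using cyc_rot[OF r2] .
  have f0: "cyc a d c b V E" using cyc_refl[OF c] .
  have f1: "cyc b a d c V E" using cyc_refl[OF r1] .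
  have f2: "cyc c b a d V E" using cyc_refl[OF r2] .
  have f3: "cyc d c b a V E" using cyc_refl[OF r3] .
  have V: "V = {a,b,c,d}" using c by (simp add: cyc_def)
  show ?thesis using u u' uu c r1 r2 r3 f0 f1 f2 f3 unfolding V by blast
qed

lemma cyc_wf: "cyc a b c d V E \<Longrightarrow> wfg V E"
  unfolding cyc_def wfg_def by (auto simp: card_insert_if)

lemma cyc_card: "cyc a b c d V E \<Longrightarrow> card V = 4"
  unfolding cyc_def by (auto simp: card_insert_if)

lemma card4: "card {p,q,r,s} \<le> 4"
  by (auto simp: card_insert_if)

lemma NN_one: "{r,s} \<in> E \<Longrightarrow> finite E \<Longrightarrow> W = {r,s} \<Longrightarrow> 1 \<le> NN E W"
  unfolding NN_def using ms_single[of r s E] ms_fin[of E W]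
  by (metis One_nat_def Suc_leI card_gt_0_iff empty_iff)

lemma cyc_P: assumes "cyc a b c d V E" shows "2 \<le> NN E V"
proof -
  have fin: "finite E" using cyc_wf[OF assms] by (rule wf_finE)
  have d: "distinct [a,b,c,d]" and V: "V = {a,b,c,d}" and E: "E = {{a,b},{b,c},{c,d},{d,a}}"
    using assms by (auto simp: cyc_def)
  have m1: "{{a,b},{c,d}} \<in> ms E V"
  proof -
    have "{{a,b}} \<union> {{c,d}} \<in> ms E ({a,b} \<union> {c,d})"
      by (rule ms_union) (use d E in \<open>auto intro: ms_single\<close>)
    thus ?thesis using V by (simp add: insert_commute)
  qed
  have m2: "{{b,c},{d,a}} \<in> ms E V"
  proof -
    have "{{b,c}} \<union> {{d,a}} \<in> ms E ({b,c} \<union> {d,a})"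
      by (rule ms_union) (use d E in \<open>auto intro: ms_single\<close>)
    thus ?thesis using V by (auto simp: insert_commute)
  qed
  have ne: "{{a,b},{c,d}} \<noteq> {{b,c},{d,a}}" using d by (auto simp: doubleton_eq_iff)
  have "card {{{a,b},{c,d}}, {{b,c},{d,a}}} \<le> card (ms E V)"
    using m1 m2 ms_fin[OF fin] by (intro card_mono) auto
  thus ?thesis using ne unfolding NN_def by simp
qed

lemma pairs4:
  assumes "e \<subseteq> {p,q,r,s}" "card e = 2"
  shows "e = {p,q} \<or> e = {p,r} \<or> e = {p,s} \<or> e = {q,r} \<or> e = {q,s} \<or> e = {r,s}"
proof -
  obtain i j where ij: "e = {i,j}" "i \<noteq> j" using assms(2) by (auto simp: card_2_iff)
  have "i \<in> {p,q,r,s}" "j \<in> {p,q,r,s}" using assms(1) ij by auto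
  thus ?thesis using ij by (auto simp: insert_commute)
qed

lemma sum_ge_card:
  fixes h :: "'b \<Rightarrow> real"
  assumes finF: "finite F" and finZ: "finite Z" and h1: "\<And>e. e \<in> F \<Longrightarrow> e \<notin> Z \<Longrightarrow> 1 \<le> h e"
    and h0: "\<And>e. 0 \<le> h e"
  shows "real (card F) - real (card Z) \<le> (\<Sum>e\<in>F. h e)"
proof -
  have "real (card F) - real (card Z) \<le> real (card (F - Z))"
    using diff_card_le_card_Diff[OF finZ, of F] by linarith
  also have "\<dots> = (\<Sum>e\<in>F - Z. 1)" by simp
  also have "\<dots> \<le> (\<Sum>e\<in>F - Z. h e)" using h1 by (intro sum_mono) auto
  also have "\<dots> \<le> (\<Sum>e\<in>F. h e)" using finF h0 by (intro sum_mono2) auto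
  finally show ?thesis .
qed

lemma cyc_edge1:
  assumes c: "cyc a b c d V1 E1" and x: "x \<notin> V1" and y: "y \<notin> V1" and xy: "x \<noteq> y"
    and F: "F \<subseteq> pairs ({x,y} \<union> (Cs V1 E1 - {a,b}))"
  shows "2 * lam ^ card F \<le> LL (V1 \<union> {x,y}) (E1 \<union> {{x,y}} \<union> {{a,x},{b,y}}) F"
proof -
  have d: "distinct [a,b,c,d]" and V: "V1 = {a,b,c,d}" and E: "E1 = {{a,b},{b,c},{c,d},{d,a}}"
    using c by (auto simp: cyc_def)
  have wfg: "wfg V1 E1" using cyc_wf[OF c] .
  interpret estep V1 E1 x y a b using wfg x y xy d V by unfold_locales auto
  have finE1: "finite E1" using wf_finE[OF wfg] .
  have FS: "F \<subseteq> pairs {x,y,c,d}"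
    using F Cs_sub[of V1 E1] V d unfolding pairs_def by blast
  have finF: "finite F" using FS pairs_fin[of "{x,y,c,d}"] finite_subset by blast
  have cardF: "card F \<le> 6" by (rule card_pairs_sub[OF _ card4 FS]) simp
  have P: "3 \<le> NN E' V'"
  proof -
    have "2 \<le> NN E1 V1" using cyc_P[OF c] .
    moreover have "1 \<le> NN E1 (V1 - {a,b})" by (rule NN_one[of c d]) (use E finE1 V d in auto)
    ultimately show ?thesis using bP by linarith
  qed
  have pt: "1 \<le> real (NN E' (V' - e))" if e: "e \<in> F" "e \<notin> {{x,d},{y,c}}" for e
  proof -
    have "e \<subseteq> {x,y,c,d}" "card e = 2" using e FS by (auto simp: pairs_def)
    hence cases: "e = {x,y} \<or> e = {x,c} \<or> e = {x,d} \<or> e = {y,c} \<or> e = {y,d} \<or> e = {c,d}"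
      by (rule pairs4)
    have "1 \<le> NN E' (V' - e)"
    proof -
      { assume "e = {x,y}"
        hence ?thesis using bxy cyc_P[OF c] by simp }
      moreover
      { assume eq: "e = {x,c}"
        have "1 \<le> NN E1 (V1 - {c,b})" by (rule NN_one[of a d]) (use E finE1 V d in auto)
        hence ?thesis using bx[of c] V d eq by auto }
      moreover
      { assume eq: "e = {y,d}"
        have "1 \<le> NN E1 (V1 - {d,a})" by (rule NN_one[of b c]) (use E finE1 V d in auto)
        hence ?thesis using by_[of d] V d eq by auto }
      moreover
      { assume eq: "e = {c,d}"
        have "1 \<le> NN E1 (V1 - {c,d})" by (rule NN_one[of a b]) (use E finE1 V d in auto)
        moreover have s: "{c,d} \<subseteq> V1 - {a,b}" using V d by auto
        moreover have "NN E1 (V1 - {c,d}) \<le> NN E' (V' - {c,d})" using bD[OF s] by linarith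
        ultimately have ?thesis using eq by simp }
      ultimately show ?thesis using cases e(2) by auto
    qed
    thus ?thesis by simp
  qed
  have "real (card F) - real (card {{x,d},{y,c}}) \<le> (\<Sum>e\<in>F. real (NN E' (V' - e)))"
    by (rule sum_ge_card[OF finF]) (use pt in auto)
  moreover have "real (card {{x,d},{y,c}}) \<le> 2" by (simp add: card_insert_if)
  moreover have "0 \<le> (\<Sum>e\<in>F. real (NN E' (V' - e)))" by (simp add: sum_nonneg)
  ultimately have "max 3 (real (card F) + 1) \<le> LL V' E' F"
    using P unfolding LL_def by simp
  thus ?thesis using base_ineq1[OF cardF] by linarith
qed

lemma cyc_edge2:
  assumes c: "cyc a b c d V1 E1" and x: "x \<notin> V1" and y: "y \<notin> V1" and xy: "x \<noteq> y"
    and F: "F \<subseteq> pairs ({x,y} \<union> (Cs V1 E1 - {a,c}))"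
  shows "2 * lam ^ card F \<le> LL (V1 \<union> {x,y}) (E1 \<union> {{x,y}} \<union> {{a,x},{c,y}}) F"
proof -
  have d: "distinct [a,b,c,d]" and V: "V1 = {a,b,c,d}" and E: "E1 = {{a,b},{b,c},{c,d},{d,a}}"
    using c by (auto simp: cyc_def)
  have wfg: "wfg V1 E1" using cyc_wf[OF c] .
  interpret estep V1 E1 x y a c using wfg x y xy d V by unfold_locales auto
  have finE1: "finite E1" using wf_finE[OF wfg] .
  have FS: "F \<subseteq> pairs {x,y,b,d}"
    using F Cs_sub[of V1 E1] V d unfolding pairs_def by blast
  have finF: "finite F" using FS pairs_fin[of "{x,y,b,d}"] finite_subset by blast
  have cardF: "card F \<le> 6" by (rule card_pairs_sub[OF _ card4 FS]) simp
  have P: "2 \<le> NN E' V'"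
    using cyc_P[OF c] bP by linarith
  have pt: "1 \<le> real (NN E' (V' - e))" if e: "e \<in> F" "e \<notin> {}" for e
  proof -
    have "e \<subseteq> {x,y,b,d}" "card e = 2" using e FS by (auto simp: pairs_def)
    hence cases: "e = {x,y} \<or> e = {x,b} \<or> e = {x,d} \<or> e = {y,b} \<or> e = {y,d} \<or> e = {b,d}"
      by (rule pairs4)
    have "1 \<le> NN E' (V' - e)"
    proof -
      { assume "e = {x,y}"
        hence ?thesis using bxy cyc_P[OF c] by simp }
      moreover
      { assume eq: "e = {x,b}"
        have "1 \<le> NN E1 (V1 - {b,c})" by (rule NN_one[of d a]) (use E finE1 V d in auto)
        hence ?thesis using bx[of b] V d eq by auto }
      moreover
      { assume eq: "e = {x,d}"
        have "1 \<le> NN E1 (V1 - {d,c})" by (rule NN_one[of a b]) (use E finE1 V d in auto)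
        hence ?thesis using bx[of d] V d eq by auto }
      moreover
      { assume eq: "e = {y,b}"
        have "1 \<le> NN E1 (V1 - {b,a})" by (rule NN_one[of c d]) (use E finE1 V d in auto)
        hence ?thesis using by_[of b] V d eq by auto }
      moreover
      { assume eq: "e = {y,d}"
        have "1 \<le> NN E1 (V1 - {d,a})" by (rule NN_one[of b c]) (use E finE1 V d in auto)
        hence ?thesis using by_[of d] V d eq by auto }
      moreover
      { assume eq: "e = {b,d}"
        have h: "V1 - {b,d} - {a,c} = {}" using V by auto
        have "1 \<le> NN E1 (V1 - {b,d} - {a,c})" unfolding h by (rule NN_empty[OF finE1])
        moreover have s: "{b,d} \<subseteq> V1 - {a,c}" using V d by auto
        moreover have "NN E1 (V1 - {b,d} - {a,c}) \<le> NN E' (V' - {b,d})" using bD[OF s] by linarith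
        ultimately have ?thesis using eq by simp }
      ultimately show ?thesis using cases by auto
    qed
    thus ?thesis by simp
  qed
  have "real (card F) - real (card ({}::'a set set)) \<le> (\<Sum>e\<in>F. real (NN E' (V' - e)))"
    by (rule sum_ge_card[OF finF]) (use pt in auto)
  hence "2 + real (card F) \<le> LL V' E' F"
    using P unfolding LL_def by simp
  thus ?thesis using base_ineq2[OF cardF] by linarith
qed



definition Inv :: "'a set \<Rightarrow> 'a set set \<Rightarrow> bool" where
  "Inv V E \<longleftrightarrow> wfg V E \<and> 4 \<le> card V \<and> card (Cs V E) \<le> 4 \<and> ff (card V) \<le> real (NN E V) \<and>
     (card V = 4 \<longrightarrow> (\<exists>a b c d. cyc a b c d V E)) \<and>
     (card V \<noteq> 4 \<longrightarrow> (\<forall>F. F \<subseteq> pairs (Cs V E) \<longrightarrow> lam ^ card F * ff (card V) \<le> LL V E F))"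

lemma InvD:
  assumes "Inv V E"
  shows "wfg V E" "4 \<le> card V" "card (Cs V E) \<le> 4" "ff (card V) \<le> real (NN E V)"
    and "card V = 4 \<Longrightarrow> \<exists>a b c d. cyc a b c d V E"
    and "card V \<noteq> 4 \<Longrightarrow> F \<subseteq> pairs (Cs V E) \<Longrightarrow> lam ^ card F * ff (card V) \<le> LL V E F"
  using assms unfolding Inv_def by blast+

lemma InvI:
  assumes "wfg V E" "4 \<le> card V" "card (Cs V E) \<le> 4" "ff (card V) \<le> real (NN E V)"
    and "card V = 4 \<Longrightarrow> \<exists>a b c d. cyc a b c d V E"
    and "\<And>F. card V \<noteq> 4 \<Longrightarrow> F \<subseteq> pairs (Cs V E) \<Longrightarrow> lam ^ card F * ff (card V) \<le> LL V E F"
  shows "Inv V E"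
  using assms unfolding Inv_def by blast

lemma pairs_mono: "A \<subseteq> B \<Longrightarrow> pairs A \<subseteq> pairs B"
  unfolding pairs_def by auto

lemma LL_ge_P: "real (NN E V) \<le> LL V E F"
  unfolding LL_def by (simp add: sum_nonneg)

lemma card_minus2: "finite C \<Longrightarrow> u \<in> C \<Longrightarrow> u' \<in> C \<Longrightarrow> u \<noteq> u' \<Longrightarrow> card (C - {u,u'}) + 2 = card C"
proof -
  assume f: "finite C" and u: "u \<in> C" "u' \<in> C" "u \<noteq> u'"
  have s: "{u,u'} \<subseteq> C" using u by auto
  have "card (C - {u,u'}) = card C - card {u,u'}" using card_Diff_subset[OF _ s] by simp
  moreover have "card {u,u'} = 2" using u by simp
  moreover have "card {u,u'} \<le> card C" using card_mono[OF f s] .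
  ultimately show ?thesis by simp
qed

lemma inv_tn: "twisted_net V E \<Longrightarrow> Inv V E"
proof (induction rule: twisted_net.induct)
  case (cycle4 a b c d)
  have c: "cyc a b c d {a,b,c,d} {{a,b},{b,c},{c,d},{d,a}}" using cycle4 by (simp add: cyc_def)
  have card: "card {a,b,c,d} = 4" using cyc_card[OF c] .
  have "card (Cs {a,b,c,d} {{a,b},{b,c},{c,d},{d,a}}) \<le> 4"
  proof -
    have "card (Cs {a,b,c,d} {{a,b},{b,c},{c,d},{d,a}}) \<le> card {a,b,c,d}" by (rule card_mono[OF _ Cs_sub]) simp
    thus ?thesis using card by simp
  qed
  moreover have "ff 4 \<le> real (NN {{a,b},{b,c},{c,d},{d,a}} {a,b,c,d})"
    using cyc_P[OF c] ff4 by linarith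
  ultimately show ?case using c card cyc_wf[OF c] by (intro InvI) auto
next
  case (join_net V1 E1 V2 E2 u u' v v')
  let ?V = "V1 \<union> V2" and ?E = "E1 \<union> E2 \<union> {{u,v},{u',v'}}"
  have I1: "Inv V1 E1" and I2: "Inv V2 E2" using join_net by auto
  have wf1: "wfg V1 E1" and wf2: "wfg V2 E2" using InvD(1)[OF I1] InvD(1)[OF I2] .
  note st = net_struct[OF wf1 wf2 join_net.hyps(3-9)]
  have finE: "finite ?E" using wf_finE[OF st(1)] .
  have c4: "4 \<le> card V1" "4 \<le> card V2" using InvD(2)[OF I1] InvD(2)[OF I2] .
  have cardV: "card ?V = card V1 + card V2" using st(2) .
  have finC1: "finite (Cs V1 E1)" "finite (Cs V2 E2)"
    using finite_subset[OF Cs_sub] wf1 wf2 unfolding wfg_def by blast+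
  have uC: "u \<in> Cs V1 E1" "u' \<in> Cs V1 E1" "v \<in> Cs V2 E2" "v' \<in> Cs V2 E2"
    using join_net.hyps by (auto simp: Cs_def)
  have "card (Cs ?V ?E) \<le> card (Cs V1 E1 - {u,u'}) + card (Cs V2 E2 - {v,v'})"
  proof -
    have "card (Cs ?V ?E) \<le> card ((Cs V1 E1 - {u,u'}) \<union> (Cs V2 E2 - {v,v'}))"
      by (rule card_mono[OF _ st(3)]) (use finC1 in simp)
    also have "\<dots> \<le> card (Cs V1 E1 - {u,u'}) + card (Cs V2 E2 - {v,v'})" by (rule card_Un_le)
    finally show ?thesis .
  qed
  moreover have "card (Cs V1 E1 - {u,u'}) + 2 = card (Cs V1 E1)"
    using card_minus2[OF finC1(1) uC(1,2)] join_net.hyps by simp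
  moreover have "card (Cs V2 E2 - {v,v'}) + 2 = card (Cs V2 E2)"
    using card_minus2[OF finC1(2) uC(3,4)] join_net.hyps by simp
  moreover have "card (Cs V1 E1) \<le> 4" "card (Cs V2 E2) \<le> 4" using InvD(3)[OF I1] InvD(3)[OF I2] .
  ultimately have cC: "card (Cs ?V ?E) \<le> 4" by linarith
  have finC: "finite (Cs ?V ?E)" using finite_subset[OF Cs_sub] st(1) unfolding wfg_def by blast
  have "NN E1 V1 * NN E2 V2 \<le> NN ?E ?V"
    by (rule NN_prod[OF finE]) (use join_net.hyps wf_ne[OF wf1] wf_ne[OF wf2] in auto)
  hence "real (NN E1 V1 * NN E2 V2) \<le> real (NN ?E ?V)" by (rule of_nat_mono)
  hence "real (NN E1 V1) * real (NN E2 V2) \<le> real (NN ?E ?V)" by simp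
  moreover have "ff (card V1) * ff (card V2) \<le> real (NN E1 V1) * real (NN E2 V2)"
    using InvD(4)[OF I1] InvD(4)[OF I2] ff_pos by (intro mult_mono) (auto intro: less_imp_le)
  ultimately have P: "2 powr (2/3) * ff (card ?V) \<le> real (NN ?E ?V)"
    using ff_join cardV by simp
  have gen: "lam ^ card F * ff (card ?V) \<le> LL ?V ?E F" if F: "F \<subseteq> pairs (Cs ?V ?E)" for F
  proof -
    have "card F \<le> 6" using card_pairs_sub[OF finC cC F] .
    hence "lam ^ card F \<le> 2 powr (2/3)" by (rule lam_pow_le)
    hence "lam ^ card F * ff (card ?V) \<le> 2 powr (2/3) * ff (card ?V)"
      using ff_pos by (intro mult_right_mono) (auto intro: less_imp_le)
    thus ?thesis using P LL_ge_P[of ?E ?V F] by linarith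
  qed
  have "ff (card ?V) \<le> real (NN ?E ?V)" using gen[of "{}"] by (simp add: LL_def)
  thus ?case using st(1) cC c4 cardV by (intro InvI gen) auto
next
  case (join_edge V1 E1 x y u u')
  let ?V = "V1 \<union> {x,y}" and ?E = "E1 \<union> {{x,y}} \<union> {{u,x},{u',y}}"
  have I1: "Inv V1 E1" using join_edge by auto
  have wf1: "wfg V1 E1" using InvD(1)[OF I1] .
  note st = edge_struct[OF wf1 join_edge.hyps(3) join_edge.hyps(4) join_edge.hyps(2) join_edge.hyps(5-7)]
  have uV: "u \<in> V1" "u' \<in> V1" using join_edge.hyps by (auto simp: corner_def)
  interpret estep V1 E1 x y u u' using wf1 join_edge.hyps uV by unfold_locales auto
  have c4: "4 \<le> card V1" using InvD(2)[OF I1] .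
  have cardV: "card ?V = card V1 + 2" using st(2) .
  have finC1: "finite (Cs V1 E1)" using finite_subset[OF Cs_sub] wf1 unfolding wfg_def by blast
  have uC: "u \<in> Cs V1 E1" "u' \<in> Cs V1 E1" using join_edge.hyps by (auto simp: Cs_def)
  have "card (Cs ?V ?E) \<le> card {x,y} + card (Cs V1 E1 - {u,u'})"
  proof -
    have "card (Cs ?V ?E) \<le> card ({x,y} \<union> (Cs V1 E1 - {u,u'}))"
      by (rule card_mono[OF _ st(3)]) (use finC1 in simp)
    also have "\<dots> \<le> card {x,y} + card (Cs V1 E1 - {u,u'})" by (rule card_Un_le)
    finally show ?thesis .
  qed
  moreover have "card (Cs V1 E1 - {u,u'}) + 2 = card (Cs V1 E1)"
    using card_minus2[OF finC1 uC] join_edge.hyps by simp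
  moreover have "card (Cs V1 E1) \<le> 4" using InvD(3)[OF I1] .
  moreover have "card {x,y} = 2" using join_edge.hyps by simp
  ultimately have cC: "card (Cs ?V ?E) \<le> 4" by linarith
  have finC: "finite (Cs ?V ?E)" using finite_subset[OF Cs_sub] st(1) unfolding wfg_def by blast
  have Fsub: "F \<subseteq> pairs ({x,y} \<union> (Cs V1 E1 - {u,u'}))" if "F \<subseteq> pairs (Cs ?V ?E)" for F
    using that pairs_mono[OF st(3)] by blast
  have Pge: "ff (card V1) \<le> real (NN E1 V1)" using InvD(4)[OF I1] .
  have gen: "lam ^ card F * ff (card ?V) \<le> LL ?V ?E F" if F: "F \<subseteq> pairs (Cs ?V ?E)" for F
  proof -
    have cF: "card F \<le> 6" using card_pairs_sub[OF finC cC F] .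
    show ?thesis
    proof (cases "card V1 = 4")
      case True
      then obtain a b c d where c: "cyc a b c d V1 E1" using InvD(5)[OF I1] by blast
      have V: "V1 = {a,b,c,d}" using c by (simp add: cyc_def)
      obtain a' b' c' d' where c': "cyc a' b' c' d' V1 E1" and ua: "u = a'" and ub: "u' = b' \<or> u' = c'"
        using cyc_wlog[OF c uV u'V uu] by blast
      have ff6: "ff (card ?V) = 2" using cardV True ff6 by simp
      have "2 * lam ^ card F \<le> LL ?V ?E F"
        using ub
      proof
        assume "u' = b'"
        thus ?thesis using cyc_edge1[OF c' x y xy, of F] Fsub[OF F] ua by simp
      next
        assume "u' = c'"
        thus ?thesis using cyc_edge2[OF c' x y xy, of F] Fsub[OF F] ua by simp
      qed
      thus ?thesis using ff6 by (simp add: mult.commute)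
    next
      case False
      obtain G where G: "G \<subseteq> pairs (Cs V1 E1)" "card G = card (F - {{x,y}}) + 1"
        "LL V1 E1 G + (if {x,y} \<in> F then real (NN E1 V1) else 0) \<le> LL ?V ?E F"
        using general_step[OF uC Fsub[OF F]] by blast
      have IG: "lam ^ card G * ff (card V1) \<le> LL V1 E1 G" using InvD(6)[OF I1 False G(1)] .
      have ffs: "ff (card ?V) = lam * ff (card V1)" using cardV ff_step by simp
      have finF: "finite F" using F pairs_fin[OF finC] finite_subset by blast
      show ?thesis
      proof (cases "{x,y} \<in> F")
        case True
        have "card F > 0" using True finF card_gt_0_iff by blast
        hence "card (F - {{x,y}}) + 1 = card F" using True finF by (simp add: card_Diff_singleton)
        hence cg: "card G = card F" using G(2) by simp
        have "lam ^ (card F + 1) * ff (card V1) \<le> ff (card V1) + lam ^ card F * ff (card V1)"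
          using step_ineq[OF cF less_imp_le[OF ff_pos]] .
        also have "\<dots> \<le> real (NN E1 V1) + LL V1 E1 G" using Pge IG cg by simp
        also have "\<dots> \<le> LL ?V ?E F" using G(3) True by simp
        finally show ?thesis using ffs by (simp add: mult.assoc mult.commute mult.left_commute)
      next
        case False
        hence cg: "card G = card F + 1" using G(2) by simp
        have "lam ^ (card F + 1) * ff (card V1) \<le> LL V1 E1 G" using IG cg by simp
        also have "\<dots> \<le> LL ?V ?E F" using G(3) False by simp
        finally show ?thesis using ffs by (simp add: mult.assoc mult.commute mult.left_commute)
      qed
    qed
  qed
  have "ff (card ?V) \<le> real (NN ?E ?V)" using gen[of "{}"] by (simp add: LL_def)
  thus ?case using st(1) cC c4 cardV by (intro InvI gen) auto
qed

lemma ms_pm: "wfg V E \<Longrightarrow> {M. perfect_matching V E M} = ms E V"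
proof -
  assume w: "wfg V E"
  have "\<And>M. M \<subseteq> E \<Longrightarrow> \<Union>M \<subseteq> V" using w unfolding wfg_def by blast
  thus ?thesis unfolding ms_def perfect_matching_def by blast
qed

theorem mainTheorem16:
  assumes "twisted_net V E"
  shows "real (card {M. perfect_matching V E M}) \<ge> 2 powr (real (card V) / 18 + 2 / 3)"
proof -
  have I: "Inv V E" using inv_tn[OF assms] .
  hence "wfg V E" "ff (card V) \<le> real (NN E V)" using InvD(1,4) by blast+
  hence "ff (card V) \<le> real (card {M. perfect_matching V E M})" by (simp add: ms_pm NN_def)
  thus ?thesis by (simp add: ff_def)
qed

end
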